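(* Let $\lambda_1$ be a Dyck path of length $2n_1$ and $\lambda_2$ a Dyck path of length $2m_1$, and let $\lambda=\lambda_1\lambda_2$ be their concatenation. Then $$P_{\lambda,\lambda_0}=\genfrac{[}{]}{0pt}{}{n_1+m_1}{n_1}P_{\lambda_1,\lambda_0}P_{\lambda_2,\lambda_0}.$$
   Context: $[n]=\sum_{i=0}^{n-1}q^i$, $[n]!=\prod_{i=1}^n[i]$, $\genfrac{[}{]}{0pt}{}{n}{k}=[n]!/([k]![n-k]!)$. For a Dyck word $\lambda$: chords are matched $U$–$D$ pairs (parenthesis matching); $A(\lambda)$ is the rooted plane tree with one edge per chord, the edge of chord $c$ hanging directly below the edge of the innermost chord strictly containing $c$, or from the root if none; siblings ordered left to right. The capacity of a leaf edge (a chord whose $U$ is immediately followed by its $D$), with respect to $\lambda_0$ the all-$U$ word of the length of $\lambda$, is the number of $D$'s of $\lambda$ strictly to the left of that $U$. A labelling of Lascoux--Sch\"utzenberger type assigns non-negative integers to edges so that each edge's label is at most those of the edges directly below it, and each leaf edge's label is at most its capacity. $P_{\lambda,\lambda_0}=\sum q^{\text{sum of labels}}$ over these labellings. *)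

theory Defs
  imports "HOL-Computational_Algebra.Polynomial"
begin

(* Words over {U,D}: True = U, False = D. *)

definition qint :: "nat \<Rightarrow> int poly" where
  "qint n = (\<Sum>i<n. monom 1 i)"

definition qfact :: "nat \<Rightarrow> int poly" where
  "qfact n = (\<Prod>i=1..n. qint i)"

definition qbinom :: "nat \<Rightarrow> nat \<Rightarrow> int poly" where
  "qbinom n k = qfact n div (qfact k * qfact (n - k))"

definition ht :: "bool list \<Rightarrow> nat \<Rightarrow> int" where
  "ht w k = int (length (filter id (take k w))) - int (length (filter Not (take k w)))"

definition dyck :: "bool list \<Rightarrow> bool" where
  "dyck w \<longleftrightarrow> ht w (length w) = 0 \<and> (\<forall>k\<le>length w. ht w k \<ge> 0)"

(* position of the D matched with the U at position i (parenthesis matching) *)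
definition match :: "bool list \<Rightarrow> nat \<Rightarrow> nat" where
  "match w i = (LEAST j. i < j \<and> ht w (Suc j) = ht w i)"

definition chords :: "bool list \<Rightarrow> (nat \<times> nat) set" where
  "chords w = {(i, match w i) | i. i < length w \<and> w ! i}"

definition strictly_contains :: "nat \<times> nat \<Rightarrow> nat \<times> nat \<Rightarrow> bool" where
  "strictly_contains c d \<longleftrightarrow> fst c < fst d \<and> snd d < snd c"

(* edge of chord d hangs directly below edge of chord c in A(w):
   c is the innermost chord strictly containing d *)
definition directly_below :: "bool list \<Rightarrow> nat \<times> nat \<Rightarrow> nat \<times> nat \<Rightarrow> bool" where
  "directly_below w d c \<longleftrightarrow> c \<in> chords w \<and> d \<in> chords w \<and> strictly_contains c d \<and>
     \<not> (\<exists>e\<in>chords w. strictly_contains c e \<and> strictly_contains e d)"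

definition leaf_chord :: "nat \<times> nat \<Rightarrow> bool" where
  "leaf_chord c \<longleftrightarrow> snd c = Suc (fst c)"

(* capacity w.r.t. lambda_0: number of D's strictly left of the U *)
definition capacity :: "bool list \<Rightarrow> nat \<times> nat \<Rightarrow> nat" where
  "capacity w c = length (filter Not (take (fst c) w))"

(* labellings of Lascoux--Schuetzenberger type; labels outside the chords are fixed to 0 *)
definition LS_labellings :: "bool list \<Rightarrow> ((nat \<times> nat) \<Rightarrow> nat) set" where
  "LS_labellings w = {L. (\<forall>c. c \<notin> chords w \<longrightarrow> L c = 0) \<and>
      (\<forall>c d. directly_below w d c \<longrightarrow> L c \<le> L d) \<and>
      (\<forall>c\<in>chords w. leaf_chord c \<longrightarrow> L c \<le> capacity w c)}"

definition P_poly :: "bool list \<Rightarrow> int poly" where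
  "P_poly w = (\<Sum>L\<in>LS_labellings w. monom 1 (\<Sum>c\<in>chords w. L c))"

end

theory Submission
  imports Defs
begin

fun qb :: "nat \<Rightarrow> nat \<Rightarrow> int poly" where
  "qb n 0 = 1"
| "qb 0 (Suc k) = 0"
| "qb (Suc n) (Suc k) = qb n k + monom 1 (Suc k) * qb n (Suc k)"

lemma qint_Suc: "qint (Suc n) = qint n + monom 1 n"
  unfolding qint_def by simp

lemma qint_add: "qint (a + b) = qint a + monom 1 a * qint b"
proof (induction b)
  case 0 then show ?case by (simp add: qint_def)
next
  case (Suc b) then show ?case by (simp add: qint_Suc algebra_simps mult_monom)
qed

lemma qint_0[simp]: "qint 0 = 0" by (simp add: qint_def)

lemma qfact_Suc: "qfact (Suc n) = qfact n * qint (Suc n)"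
  unfolding qfact_def by (simp add: prod.nat_ivl_Suc')

lemma qfact_0[simp]: "qfact 0 = 1" unfolding qfact_def by simp

lemma poly_qint: "poly (qint n) 1 = int n"
  unfolding qint_def by (simp add: poly_sum poly_monom)

lemma poly_qfact: "poly (qfact n) 1 = int (fact n)"
  by (induction n) (simp_all add: qfact_Suc poly_qint algebra_simps)

lemma qfact_nz: "qfact n \<noteq> 0"
proof
  assume "qfact n = 0"
  then have "poly (qfact n) 1 = 0" by simp
  then show False by (simp add: poly_qfact)
qed

lemma qb_gt: "n < k \<Longrightarrow> qb n k = 0"
proof (induction n arbitrary: k)
  case 0 then show ?case by (cases k) auto
next
  case (Suc n) then show ?case by (cases k) auto
qed

lemma qb_nn[simp]: "qb n n = 1"
  by (induction n) (auto simp: qb_gt)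

lemma qb_fact: "k \<le> n \<Longrightarrow> qb n k * qfact k * qfact (n - k) = qfact n"
proof (induction n arbitrary: k)
  case 0 then show ?case by simp
next
  case (Suc n k)
  show ?case
  proof (cases k)
    case 0 then show ?thesis by simp
  next
    case (Suc k')
    then have kn: "k' \<le> n" using Suc.prems by simp
    have t1: "qb n k' * qfact (Suc k') * qfact (n - k') = qfact n * qint (Suc k')"
      using Suc.IH[OF kn] by (simp add: qfact_Suc algebra_simps)
    have t2: "monom 1 (Suc k') * qb n (Suc k') * qfact (Suc k') * qfact (n - k')
              = monom 1 (Suc k') * (qfact n * qint (n - k'))"
    proof (cases "k' = n")
      case True then show ?thesis by (simp add: qb_gt)
    next
      case False
      then have kn2: "Suc k' \<le> n" using kn by simp
      have "n - k' = Suc (n - Suc k')" using kn2 by simp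
      then have "qfact (n - k') = qfact (n - Suc k') * qint (n - k')"
        by (simp add: qfact_Suc)
      then show ?thesis using Suc.IH[OF kn2] by (simp add: algebra_simps)
    qed
    have "qb (Suc n) k * qfact k * qfact (Suc n - k)
        = qb n k' * qfact (Suc k') * qfact (n - k') + monom 1 (Suc k') * qb n (Suc k') * qfact (Suc k') * qfact (n - k')"
      using Suc by (simp add: algebra_simps)
    also have "\<dots> = qfact n * (qint (Suc k') + monom 1 (Suc k') * qint (n - k'))"
      using t1 t2 by (simp add: algebra_simps)
    also have "qint (Suc k') + monom 1 (Suc k') * qint (n - k') = qint (Suc n)"
      using kn qint_add[of "Suc k'" "n - k'"] by simp
    finally show ?thesis by (simp add: qfact_Suc)
  qed
qed

lemma qbinom_qb: "k \<le> n \<Longrightarrow> qbinom n k = qb n k"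
proof -
  assume "k \<le> n"
  then have "qfact n = qb n k * (qfact k * qfact (n - k))" using qb_fact by (simp add: mult.assoc)
  then show ?thesis unfolding qbinom_def using qfact_nz
    by (simp add: nonzero_mult_div_cancel_right)
qed

lemma qb_hockey: "(\<Sum>a\<le>s. monom 1 (a * (m + 1)) * qb (s - a + m) m) = qb (s + m + 1) (m + 1)"
proof (induction s)
  case 0 then show ?case by (simp add: qb_gt)
next
  case (Suc s)
  have "(\<Sum>a\<le>Suc s. monom 1 (a * (m + 1)) * qb (Suc s - a + m) m)
      = monom 1 (0 * (m + 1)) * qb (Suc s - 0 + m) m + (\<Sum>a\<le>s. monom 1 (Suc a * (m + 1)) * qb (Suc s - Suc a + m) m)"
    by (rule sum.atMost_Suc_shift)
  also have "(\<Sum>a\<le>s. monom 1 (Suc a * (m + 1)) * qb (Suc s - Suc a + m) m)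
     = monom 1 (m+1) * (\<Sum>a\<le>s. monom 1 (a * (m + 1)) * qb (s - a + m) m)"
    unfolding sum_distrib_left by (rule sum.cong) (simp_all add: mult_monom algebra_simps)
  finally show ?case using Suc.IH by simp
qed

lemma qb_mult: "qb (s + n) n * qb (s + n + m) m = qb (s + n + m) (n + m) * qb (n + m) m"
proof -
  have h1: "qb (s+n) n * qfact n * qfact s = qfact (s+n)" using qb_fact[of n "s+n"] by simp
  have h2: "qb (s+n+m) m * qfact m * qfact (s+n) = qfact (s+n+m)" using qb_fact[of m "s+n+m"] by simp
  have h3: "qb (n+m) m * qfact m * qfact n = qfact (n+m)" using qb_fact[of m "n+m"] by simp
  have h4: "qb (s+n+m) (n+m) * qfact (n+m) * qfact s = qfact (s+n+m)" using qb_fact[of "n+m" "s+n+m"] by simp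
  have "qb (s + n) n * qb (s + n + m) m * (qfact n * qfact s * qfact m)
      = qb (s+n+m) m * qfact m * (qb (s+n) n * qfact n * qfact s)" by (simp only: ac_simps)
  also have "\<dots> = qfact (s+n+m)" using h1 h2 by simp
  finally have e1: "qb (s + n) n * qb (s + n + m) m * (qfact n * qfact s * qfact m) = qfact (s+n+m)" .
  have "qb (s + n + m) (n + m) * qb (n + m) m * (qfact n * qfact s * qfact m)
      = qb (s+n+m) (n+m) * (qb (n+m) m * qfact m * qfact n) * qfact s" by (simp only: ac_simps)
  also have "\<dots> = qfact (s+n+m)" using h3 h4 by simp
  finally have e2: "qb (s + n + m) (n + m) * qb (n + m) m * (qfact n * qfact s * qfact m) = qfact (s+n+m)" .
  have nz: "qfact n * qfact s * qfact m \<noteq> 0" using qfact_nz by simp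
  show ?thesis using e1 e2 nz by (metis mult_cancel_right)
qed

lemma ht_0[simp]: "ht w 0 = 0" by (simp add: ht_def)

lemma ht_app: "ht (u @ v) k = ht u k + ht v (k - length u)"
  by (simp add: ht_def)

lemma ht_ge: "length w \<le> k \<Longrightarrow> ht w k = ht w (length w)"
  by (simp add: ht_def)

lemma ht_Suc: "k < length w \<Longrightarrow> ht w (Suc k) = ht w k + (if w ! k then 1 else -1)"
  by (simp add: ht_def take_Suc_conv_app_nth)

lemma ht_Cons: "ht (b # x) (Suc k) = (if b then 1 else -1) + ht x k"
  by (simp add: ht_def)

lemma ht_step: "ht w (Suc k) \<ge> ht w k - 1"
proof (cases "k < length w")
  case True then show ?thesis by (simp add: ht_Suc)
next
  case False then show ?thesis using ht_ge[of w k] ht_ge[of w "Suc k"] by simp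
qed

lemma ivt_int:
  fixes f :: "nat \<Rightarrow> int"
  assumes step: "\<And>k. f (Suc k) \<ge> f k - 1"
  shows "a \<le> b \<Longrightarrow> f a \<ge> h \<Longrightarrow> f b \<le> h \<Longrightarrow> \<exists>k. a \<le> k \<and> k \<le> b \<and> f k = h"
proof (induction b)
  case 0 then show ?case by auto
next
  case (Suc b)
  show ?case
  proof (cases "a = Suc b")
    case True then show ?thesis using Suc.prems by auto
  next
    case False
    then have ab: "a \<le> b" using Suc.prems by simp
    show ?thesis
    proof (cases "f b \<le> h")
      case True then show ?thesis using Suc.IH[OF ab Suc.prems(2)] by auto
    next
      case False
      then have "f (Suc b) = h" using step[of b] Suc.prems(3) by linarith
      then show ?thesis using Suc.prems by auto
    qed
  qed
qed

lemma dyck_end: "dyck w \<Longrightarrow> length w \<le> k \<Longrightarrow> ht w k = 0"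
  using ht_ge[of w k] unfolding dyck_def by simp

lemma dyck_nonneg: "ht w k \<ge> 0" if "dyck w"
proof (cases "k \<le> length w")
  case True then show ?thesis using that unfolding dyck_def by blast
next
  case False then show ?thesis using dyck_end[OF that, of k] by simp
qed

lemma ht_app_le: "k \<le> length u \<Longrightarrow> ht (u @ v) k = ht u k"
  by (simp add: ht_app)

lemma ht_app_ge: "dyck u \<Longrightarrow> length u \<le> k \<Longrightarrow> ht (u @ v) k = ht v (k - length u)"
  by (simp add: ht_app dyck_end)

lemma dyck_iff: "dyck w \<longleftrightarrow> ht w (length w) = 0 \<and> (\<forall>k. ht w k \<ge> 0)"
proof
  assume "dyck w" then show "ht w (length w) = 0 \<and> (\<forall>k. ht w k \<ge> 0)"
    using dyck_nonneg unfolding dyck_def by blast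
next
  assume "ht w (length w) = 0 \<and> (\<forall>k. ht w k \<ge> 0)" then show "dyck w"
    unfolding dyck_def by blast
qed

lemma dyck_app: "dyck u \<Longrightarrow> dyck v \<Longrightarrow> dyck (u @ v)"
proof -
  assume u: "dyck u" and v: "dyck v"
  have "ht (u @ v) (length (u @ v)) = 0" using dyck_end[OF u, of "length u + length v"] v
    unfolding dyck_def by (simp add: ht_app)
  moreover have "ht (u @ v) k \<ge> 0" for k
    using dyck_nonneg[OF u, of k] dyck_nonneg[OF v, of "k - length u"] by (simp add: ht_app)
  ultimately show ?thesis unfolding dyck_iff by blast
qed

lemma ht_wrap_mid: "k \<le> length x \<Longrightarrow> ht (True # x @ [False]) (Suc k) = 1 + ht x k"
  by (simp add: ht_Cons ht_app_le)

lemma ht_wrap_end: "ht x (length x) = 0 \<Longrightarrow> length x + 2 \<le> k \<Longrightarrow> ht (True # x @ [False]) k = 0"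
  by (simp add: ht_app ht_def)

lemma dyck_wrap: "dyck x \<Longrightarrow> dyck (True # x @ [False])"
proof -
  assume d: "dyck x"
  have e: "ht x (length x) = 0" using d by (simp add: dyck_def)
  have "ht (True # x @ [False]) k \<ge> 0" for k
  proof (cases k)
    case 0 then show ?thesis by simp
  next
    case (Suc k')
    show ?thesis
    proof (cases "k' \<le> length x")
      case True then show ?thesis using Suc ht_wrap_mid[OF True] dyck_nonneg[OF d, of k'] by simp
    next
      case False then show ?thesis using Suc ht_wrap_end[OF e, of k] by simp
    qed
  qed
  moreover have "ht (True # x @ [False]) (length (True # x @ [False])) = 0"
    using ht_wrap_end[OF e] by simp
  ultimately show ?thesis by (simp add: dyck_iff)
qed

definition chset :: "bool list \<Rightarrow> (nat \<times> nat) set" where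
  "chset w = {(i, j). i < j \<and> j < length w \<and> w ! i \<and> ht w (Suc j) = ht w i \<and>
               (\<forall>k. i < k \<longrightarrow> k \<le> j \<longrightarrow> ht w i < ht w k)}"

lemma chords_chset: assumes d: "dyck w" shows "chords w = chset w"
proof
  show "chords w \<subseteq> chset w"
  proof
    fix c assume "c \<in> chords w"
    then obtain i where c: "c = (i, match w i)" and il: "i < length w" and wi: "w ! i"
      unfolding chords_def by auto
    define P where "P j \<longleftrightarrow> i < j \<and> ht w (Suc j) = ht w i" for j
    have m: "match w i = (LEAST j. P j)" unfolding match_def P_def by simp
    have hs: "ht w (Suc i) = ht w i + 1" using ht_Suc[OF il] wi by simp
    have st: "\<And>k. ht w (Suc k) \<ge> ht w k - 1" by (rule ht_step)
    obtain k where k: "Suc i \<le> k" "k \<le> length w" "ht w k = ht w i"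
      using ivt_int[of "ht w", OF st, of "Suc i" "length w" "ht w i"] il hs
        dyck_nonneg[OF d, of i] d by (auto simp: dyck_def)
    then obtain j0 where j0: "k = Suc j0" by (cases k) auto
    have "k \<noteq> Suc i" using k hs by auto
    then have P0: "P j0" using k j0 by (auto simp: P_def)
    have Pm: "P (match w i)" unfolding m by (rule LeastI[of P j0, OF P0])
    have ml: "match w i \<le> j0" unfolding m by (rule Least_le[of P j0, OF P0])
    have "ht w i < ht w k'" if ik: "i < k'" and km: "k' \<le> match w i" for k'
    proof (rule ccontr)
      assume "\<not> ht w i < ht w k'"
      then obtain k2 where k2: "Suc i \<le> k2" "k2 \<le> k'" "ht w k2 = ht w i"
        using ivt_int[of "ht w", OF st, of "Suc i" k' "ht w i"] ik hs by fastforce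
      then obtain j' where j': "k2 = Suc j'" by (cases k2) auto
      have "k2 \<noteq> Suc i" using k2 hs by auto
      then have "P j'" using k2 j' by (auto simp: P_def)
      moreover have "j' < match w i" using k2 j' km by simp
      ultimately show False unfolding m using not_less_Least by blast
    qed
    then show "c \<in> chset w" unfolding chset_def c using Pm ml j0 k wi by (auto simp: P_def)
  qed
next
  show "chset w \<subseteq> chords w"
  proof
    fix c assume "c \<in> chset w"
    then obtain i j where c: "c = (i, j)" and ij: "i < j" "j < length w" "w ! i"
      "ht w (Suc j) = ht w i" and mn: "\<And>k. i < k \<Longrightarrow> k \<le> j \<Longrightarrow> ht w i < ht w k"
      unfolding chset_def by auto
    have "match w i = j" unfolding match_def
    proof (rule Least_equality)
      show "i < j \<and> ht w (Suc j) = ht w i" using ij by simp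
      fix y assume y: "i < y \<and> ht w (Suc y) = ht w i"
      show "j \<le> y"
      proof (rule ccontr)
        assume "\<not> j \<le> y"
        then show False using mn[of "Suc y"] y by auto
      qed
    qed
    then show "c \<in> chords w" unfolding chords_def c using ij by auto
  qed
qed

definition sh :: "nat \<Rightarrow> nat \<times> nat \<Rightarrow> nat \<times> nat" where
  "sh k c = (fst c + k, snd c + k)"

lemma sh_simp[simp]: "sh k (a, b) = (a + k, b + k)" by (simp add: sh_def)

lemma inj_sh: "inj (sh k)" by (auto simp: inj_def sh_def prod_eq_iff)

lemma chset_bound: "(i, j) \<in> chset w \<Longrightarrow> i < j \<and> j < length w \<and> w ! i"
  by (simp add: chset_def)

lemma chset_app:
  assumes u: "dyck u" and v: "dyck v"
  shows "chset (u @ v) = chset u \<union> sh (length u) ` chset v"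
proof -
  let ?n = "length u" and ?w = "u @ v"
  have hA: "\<And>k. k \<le> ?n \<Longrightarrow> ht ?w k = ht u k" by (rule ht_app_le)
  have hB: "\<And>k. ht ?w (k + ?n) = ht v k" using ht_app_ge[OF u] by simp
  have un: "ht u ?n = 0" using u by (simp add: dyck_def)
  have nA: "\<And>i. i < ?n \<Longrightarrow> ?w ! i = u ! i" by (simp add: nth_append)
  have nB: "\<And>i. ?w ! (i + ?n) = v ! i" by (simp add: nth_append)
  show ?thesis
  proof (intro equalityI subsetI)
    fix c assume c: "c \<in> chset ?w"
    then obtain i j where cij: "c = (i, j)" and ij: "i < j" "j < length ?w" "?w ! i"
      "ht ?w (Suc j) = ht ?w i" and mn: "\<And>k. i < k \<Longrightarrow> k \<le> j \<Longrightarrow> ht ?w i < ht ?w k"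
      unfolding chset_def by auto
    show "c \<in> chset u \<union> sh ?n ` chset v"
    proof (cases "i < ?n")
      case True
      have jn: "j < ?n"
      proof (rule ccontr)
        assume "\<not> j < ?n"
        then have "ht ?w i < ht ?w ?n" using mn[of ?n] True by simp
        then show False using hA[of ?n] hA[of i] True un dyck_nonneg[OF u, of i] by simp
      qed
      have "(i, j) \<in> chset u" unfolding chset_def
        using ij jn True mn hA nA by auto
      then show ?thesis using cij by simp
    next
      case False
      then obtain i' where i': "i = i' + ?n" by (metis add.commute le_Suc_ex not_less)
      obtain j' where j': "j = j' + ?n" using ij(1) i' by (metis add.commute le_Suc_ex less_imp_le_nat le_add2 le_trans)
      have "(i', j') \<in> chset v" unfolding chset_def
      proof (intro CollectI case_prodI conjI allI impI)
        show "i' < j'" using ij i' j' by simp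
        show "j' < length v" using ij j' by simp
        show "v ! i'" using ij i' nB by simp
        show "ht v (Suc j') = ht v i'" using ij(4) i' j' hB[of "Suc j'"] hB[of i'] by simp
        fix k assume "i' < k" "k \<le> j'"
        then show "ht v i' < ht v k" using mn[of "k + ?n"] i' j' hB by simp
      qed
      then show ?thesis using cij i' j' by force
    qed
  next
    fix c assume "c \<in> chset u \<union> sh ?n ` chset v"
    then show "c \<in> chset ?w"
    proof
      assume c: "c \<in> chset u"
      then obtain i j where cij: "c = (i, j)" and ij: "i < j" "j < ?n" "u ! i"
        "ht u (Suc j) = ht u i" and mn: "\<And>k. i < k \<Longrightarrow> k \<le> j \<Longrightarrow> ht u i < ht u k"
        unfolding chset_def by auto
      show ?thesis unfolding chset_def cij using ij mn hA nA by auto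
    next
      assume "c \<in> sh ?n ` chset v"
      then obtain i j where cij: "c = (i + ?n, j + ?n)" and ij: "i < j" "j < length v" "v ! i"
        "ht v (Suc j) = ht v i" and mn: "\<And>k. i < k \<Longrightarrow> k \<le> j \<Longrightarrow> ht v i < ht v k"
        unfolding chset_def by auto
      show ?thesis unfolding chset_def cij
      proof (intro CollectI case_prodI conjI allI impI)
        show "i + ?n < j + ?n" using ij by simp
        show "j + ?n < length ?w" using ij by simp
        show "?w ! (i + ?n)" using ij nB by simp
        show "ht ?w (Suc (j + ?n)) = ht ?w (i + ?n)" using ij hB[of "Suc j"] hB[of i] by simp
        fix k assume k: "i + ?n < k" "k \<le> j + ?n"
        then obtain k' where "k = k' + ?n" by (metis add.commute le_Suc_ex less_imp_le_nat le_add2 le_trans)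
        then show "ht ?w (i + ?n) < ht ?w k" using k mn[of k'] hB by simp
      qed
    qed
  qed
qed

lemma chset_wrap:
  assumes x: "dyck x"
  shows "chset (True # x @ [False]) = insert (0, Suc (length x)) (sh 1 ` chset x)"
proof -
  let ?w = "True # x @ [False]" and ?n = "length x"
  have xn: "ht x ?n = 0" using x by (simp add: dyck_def)
  have hM: "\<And>k. k \<le> ?n \<Longrightarrow> ht ?w (Suc k) = 1 + ht x k" by (rule ht_wrap_mid)
  have hE: "ht ?w (Suc (Suc ?n)) = 0" using ht_wrap_end[OF xn] by simp
  have nM: "\<And>i. i < ?n \<Longrightarrow> ?w ! Suc i = x ! i" by (simp add: nth_append)
  have nE: "?w ! Suc ?n = False" by simp
  have pos: "\<And>k. ht x k \<ge> 0" using dyck_nonneg[OF x] by simp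
  show ?thesis
  proof (intro equalityI subsetI)
    fix c assume c: "c \<in> chset ?w"
    then obtain i j where cij: "c = (i, j)" and ij: "i < j" "j < length ?w" "?w ! i"
      "ht ?w (Suc j) = ht ?w i" and mn: "\<And>k. i < k \<Longrightarrow> k \<le> j \<Longrightarrow> ht ?w i < ht ?w k"
      unfolding chset_def by auto
    show "c \<in> insert (0, Suc ?n) (sh 1 ` chset x)"
    proof (cases i)
      case 0
      have "j = Suc ?n"
      proof (rule ccontr)
        assume "j \<noteq> Suc ?n"
        then have "j \<le> ?n" using ij by simp
        then show False using ij(4) 0 hM[of j] pos[of j] by simp
      qed
      then show ?thesis using cij 0 by simp
    next
      case (Suc i')
      have i'n: "i' < ?n" using ij Suc nE by (cases "i' = ?n") auto
      obtain j' where j': "j = Suc j'" using ij(1) by (cases j) auto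
      have j'n: "j' < ?n"
      proof (rule ccontr)
        assume "\<not> j' < ?n"
        then have "j' = ?n" using ij j' by simp
        then show False using ij(4) j' Suc hE hM[of i'] i'n pos[of i'] by simp
      qed
      have "(i', j') \<in> chset x" unfolding chset_def
      proof (intro CollectI case_prodI conjI allI impI)
        show "i' < j'" using ij Suc j' by simp
        show "j' < ?n" by (rule j'n)
        show "x ! i'" using ij Suc nM i'n by simp
        show "ht x (Suc j') = ht x i'" using ij(4) Suc j' hM[of "Suc j'"] hM[of i'] j'n i'n by simp
        fix k assume "i' < k" "k \<le> j'"
        then show "ht x i' < ht x k" using mn[of "Suc k"] Suc j' hM[of k] hM[of i'] j'n i'n by simp
      qed
      then show ?thesis using cij Suc j' by force
    qed
  next
    fix c assume "c \<in> insert (0, Suc ?n) (sh 1 ` chset x)"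
    then show "c \<in> chset ?w"
    proof
      assume c: "c = (0, Suc ?n)"
      show ?thesis unfolding chset_def c
      proof (intro CollectI case_prodI conjI allI impI)
        show "0 < Suc ?n" by simp
        show "Suc ?n < length ?w" by simp
        show "?w ! 0" by simp
        show "ht ?w (Suc (Suc ?n)) = ht ?w 0" using hE by simp
        fix k assume "0 < k" "k \<le> Suc ?n"
        then obtain k' where "k = Suc k'" "k' \<le> ?n" by (cases k) auto
        then show "ht ?w 0 < ht ?w k" using hM pos[of k'] by simp
      qed
    next
      assume "c \<in> sh 1 ` chset x"
      then obtain i j where cij: "c = (Suc i, Suc j)" and ij: "i < j" "j < ?n" "x ! i"
        "ht x (Suc j) = ht x i" and mn: "\<And>k. i < k \<Longrightarrow> k \<le> j \<Longrightarrow> ht x i < ht x k"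
        unfolding chset_def by auto
      show ?thesis unfolding chset_def cij
      proof (intro CollectI case_prodI conjI allI impI)
        show "Suc i < Suc j" using ij by simp
        show "Suc j < length ?w" using ij by simp
        show "?w ! Suc i" using ij nM by simp
        show "ht ?w (Suc (Suc j)) = ht ?w (Suc i)" using ij hM[of "Suc j"] hM[of i] by simp
        fix k assume k: "Suc i < k" "k \<le> Suc j"
        then obtain k' where "k = Suc k'" by (cases k) auto
        then show "ht ?w (Suc i) < ht ?w k" using k mn[of k'] hM[of k'] hM[of i] ij by simp
      qed
    qed
  qed
qed

lemma chords_app: "dyck u \<Longrightarrow> dyck v \<Longrightarrow> chords (u @ v) = chords u \<union> sh (length u) ` chords v"
  by (simp add: chords_chset dyck_app chset_app)

lemma chords_wrap: "dyck x \<Longrightarrow> chords (True # x @ [False]) = insert (0, Suc (length x)) (sh 1 ` chords x)"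
  by (simp add: chords_chset dyck_wrap chset_wrap)

lemma chords_bound: "dyck w \<Longrightarrow> c \<in> chords w \<Longrightarrow> fst c < snd c \<and> snd c < length w"
  by (cases c) (auto simp: chords_chset chset_def)

lemma chords_Nil: "chords [] = {}" by (simp add: chords_def)

lemma finite_chords: "finite (chords w)"
proof -
  have "chords w = (\<lambda>i. (i, match w i)) ` {i. i < length w \<and> w ! i}" unfolding chords_def by auto
  then show ?thesis by simp
qed

lemma first_return:
  assumes d: "dyck w" and ne: "w \<noteq> []"
  shows "\<exists>x y. dyck x \<and> dyck y \<and> w = (True # x @ [False]) @ y \<and> length x < length w \<and> length y < length w"
proof -
  have lw: "0 < length w" using ne by simp
  have w0: "w ! 0"
  proof (rule ccontr)
    assume "\<not> w ! 0"
    then have "ht w 1 = -1" using ht_Suc[OF lw] by simp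
    then show False using dyck_nonneg[OF d, of 1] by simp
  qed
  have "(0, match w 0) \<in> chords w" unfolding chords_def using lw w0 by auto
  then have "(0, match w 0) \<in> chset w" using chords_chset[OF d] by simp
  then obtain j where j: "0 < j" "j < length w" "ht w (Suc j) = 0"
      and mn: "\<And>k. 0 < k \<Longrightarrow> k \<le> j \<Longrightarrow> 0 < ht w k"
    unfolding chset_def by auto
  have hj: "ht w j > 0" using mn[of j] j by simp
  have wj: "\<not> w ! j"
  proof
    assume "w ! j" then have "ht w (Suc j) = ht w j + 1" using ht_Suc[OF j(2)] by simp
    then show False using hj j by simp
  qed
  have hj1: "ht w j = 1" using ht_Suc[OF j(2)] wj j by simp
  define p where "p = take (Suc j) w"
  define y where "y = drop (Suc j) w"
  define x where "x = take (j - 1) (drop 1 w)"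
  have lp: "length p = Suc j" using j by (simp add: p_def)
  have lx: "length x = j - 1" using j by (simp add: x_def)
  have pe: "p = True # x @ [False]"
  proof (rule nth_equalityI)
    show "length p = length (True # x @ [False])" using lp lx j by simp
    fix k assume "k < length p"
    then have k: "k \<le> j" using lp by simp
    show "p ! k = (True # x @ [False]) ! k"
    proof (cases k)
      case 0 then show ?thesis using w0 by (simp add: p_def)
    next
      case (Suc k')
      show ?thesis
      proof (cases "k' < j - 1")
        case True then show ?thesis using Suc k lx
          by (simp add: p_def x_def nth_append)
      next
        case False then have "k = j" using Suc k by simp
        then show ?thesis using wj lx j Suc by (simp add: p_def nth_append)
      qed
    qed
  qed
  have we: "w = p @ y" by (simp add: p_def y_def)
  have hp: "\<And>k. k \<le> length p \<Longrightarrow> ht w k = ht p k" using we ht_app_le by metis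
  have hpe: "ht p (length p) = 0" using hp[of "length p"] lp j by simp
  have hpy: "\<And>k. ht w (k + length p) = ht y k"
  proof -
    fix k
    have "ht p (k + length p) = 0" using ht_ge[of p "k + length p"] hpe by simp
    then show "ht w (k + length p) = ht y k" using we by (simp add: ht_app)
  qed
  have dy: "dyck y" unfolding dyck_iff
  proof
    show "ht y (length y) = 0" using hpy[of "length y"] we d dyck_end[OF d] by simp
    show "\<forall>k. 0 \<le> ht y k" using hpy dyck_nonneg[OF d] by metis
  qed
  have hx: "\<And>k. k \<le> length x \<Longrightarrow> ht w (Suc k) = 1 + ht x k"
  proof -
    fix k assume k: "k \<le> length x"
    have "ht w (Suc k) = ht p (Suc k)" using hp[of "Suc k"] k lp lx by simp
    also have "\<dots> = 1 + ht x k" using pe ht_wrap_mid[OF k] by simp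
    finally show "ht w (Suc k) = 1 + ht x k" .
  qed
  have dx: "dyck x" unfolding dyck_def
  proof
    show "ht x (length x) = 0" using hx[of "length x"] lx j hj1 by simp
    show "\<forall>k\<le>length x. 0 \<le> ht x k"
    proof (intro allI impI)
      fix k assume k: "k \<le> length x"
      have "Suc k \<le> j" using k lx j by linarith
      then have "0 < ht w (Suc k)" using mn[of "Suc k"] by blast
      then show "0 \<le> ht x k" using hx[OF k] by linarith
    qed
  qed
  have "w = (True # x @ [False]) @ y" using we pe by simp
  moreover have "length x < length w" using lx j by simp
  moreover have "length y < length w" using j by (simp add: y_def)
  ultimately show ?thesis using dx dy by blast
qed

lemma dyck_induct[consumes 1, case_names Nil wrap app]:
  assumes "dyck w" and "P []"
    and "\<And>x. dyck x \<Longrightarrow> P x \<Longrightarrow> P (True # x @ [False])"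
    and "\<And>u v. dyck u \<Longrightarrow> dyck v \<Longrightarrow> u \<noteq> [] \<Longrightarrow> v \<noteq> [] \<Longrightarrow> P u \<Longrightarrow> P v \<Longrightarrow> P (u @ v)"
  shows "P w"
  using assms(1)
proof (induction "length w" arbitrary: w rule: less_induct)
  case less
  show ?case
  proof (cases "w = []")
    case True then show ?thesis using assms(2) by simp
  next
    case False
    obtain x y where xy: "dyck x" "dyck y" "w = (True # x @ [False]) @ y"
      "length x < length w" "length y < length w"
      using first_return[OF less.prems False] by blast
    show ?thesis
    proof (cases "y = []")
      case True then show ?thesis using xy assms(3) less.hyps by simp
    next
      case False
      have "P (True # x @ [False])" using xy assms(3) less.hyps by simp
      moreover have "P y" using xy less.hyps by simp
      moreover have "length (True # x @ [False]) < length w" using xy False by simp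
      ultimately show ?thesis using xy assms(4)[of "True # x @ [False]" y] dyck_wrap False
        by simp
    qed
  qed
qed

abbreviation cntD :: "bool list \<Rightarrow> nat" where "cntD w \<equiv> length (filter Not w)"

lemma card_sh: "card (sh k ` A) = card A"
  by (meson card_image inj_on_subset inj_sh subset_UNIV)

lemma disj_app: "dyck u \<Longrightarrow> chords u \<inter> sh (length u) ` chords v = {}"
  using chords_bound by fastforce

lemma card_chords: "dyck w \<Longrightarrow> card (chords w) = cntD w"
proof (induction rule: dyck_induct)
  case Nil then show ?case by (simp add: chords_Nil)
next
  case (wrap x)
  have "(0, Suc (length x)) \<notin> sh 1 ` chords x" by auto
  then show ?case using wrap chords_wrap[OF wrap(1)] finite_chords
    card_sh by simp
next
  case (app u v)
  have "card (chords (u @ v)) = card (chords u) + card (sh (length u) ` chords v)"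
    using chords_app[OF app(1,2)] disj_app[OF app(1), of v] finite_chords
    by (simp add: card_Un_disjoint)
  then show ?case using app card_sh by simp
qed

lemma cntD_dyck: "dyck w \<Longrightarrow> length w = 2 * cntD w"
proof -
  assume d: "dyck w"
  have "ht w (length w) = 0" using d by (simp add: dyck_def)
  then have "length (filter id w) = length (filter Not w)" by (simp add: ht_def)
  moreover have "length (filter id w) + length (filter Not w) = length w"
    using sum_length_filter_compl[of id w] by (simp add: comp_def)
  ultimately show ?thesis by simp
qed

lemma cap_app_left: "fst c \<le> length u \<Longrightarrow> capacity (u @ v) c = capacity u c"
  by (simp add: capacity_def)

lemma cap_app_right: "capacity (u @ v) (sh (length u) c) = cntD u + capacity v c"
  by (simp add: capacity_def sh_def)

lemma cap_wrap: "fst c \<le> length x \<Longrightarrow> capacity (True # x @ [False]) (sh 1 c) = capacity x c"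
  by (simp add: capacity_def sh_def)

lemma cap_zero: "capacity w (0, b) = 0" by (simp add: capacity_def)

lemma leaf_sh[simp]: "leaf_chord (sh k c) = leaf_chord c"
  by (auto simp: leaf_chord_def sh_def)

lemma sc_sh[simp]: "strictly_contains (sh k c) (sh k d) = strictly_contains c d"
  by (auto simp: strictly_contains_def sh_def)

definition Lab :: "bool list \<Rightarrow> nat \<Rightarrow> ((nat \<times> nat) \<Rightarrow> nat) set" where
  "Lab w s = {L. (\<forall>c. c \<notin> chords w \<longrightarrow> L c = 0) \<and>
      (\<forall>c\<in>chords w. \<forall>d\<in>chords w. strictly_contains c d \<longrightarrow> L c \<le> L d) \<and>
      (\<forall>c\<in>chords w. leaf_chord c \<longrightarrow> L c \<le> capacity w c + s)}"

definition F :: "bool list \<Rightarrow> nat \<Rightarrow> int poly" where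
  "F w s = (\<Sum>L\<in>Lab w s. monom 1 (\<Sum>c\<in>chords w. L c))"

definition gap :: "nat \<times> nat \<Rightarrow> nat \<times> nat \<Rightarrow> nat" where
  "gap c d = nat ((int (snd c) - int (fst c)) - (int (snd d) - int (fst d)))"

lemma mono_chain:
  fixes L :: "nat \<times> nat \<Rightarrow> nat"
  assumes db: "\<And>c d. directly_below w d c \<Longrightarrow> L c \<le> L d"
  shows "c \<in> chords w \<Longrightarrow> d \<in> chords w \<Longrightarrow> strictly_contains c d \<Longrightarrow> L c \<le> L d"
proof (induction "gap c d" arbitrary: c d rule: less_induct)
  case less
  show ?case
  proof (cases "directly_below w d c")
    case True then show ?thesis using db by blast
  next
    case False
    then obtain e where e: "e \<in> chords w" "strictly_contains c e" "strictly_contains e d"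
      using less.prems unfolding directly_below_def by blast
    have g1: "gap c e < gap c d" using e less.prems(3) unfolding gap_def strictly_contains_def by simp
    have g2: "gap e d < gap c d" using e less.prems(3) unfolding gap_def strictly_contains_def by simp
    have "L c \<le> L e" using less.hyps[OF g1] e less.prems by blast
    also have "L e \<le> L d" using less.hyps[OF g2] e less.prems by blast
    finally show ?thesis .
  qed
qed

lemma LS_eq: "LS_labellings w = Lab w 0"
proof (intro equalityI subsetI)
  fix L assume "L \<in> LS_labellings w"
  then show "L \<in> Lab w 0" unfolding LS_labellings_def Lab_def using mono_chain[of w L] by auto
next
  fix L assume "L \<in> Lab w 0"
  then show "L \<in> LS_labellings w" unfolding LS_labellings_def Lab_def directly_below_def by auto
qed

lemma P_F: "P_poly w = F w 0"
  unfolding P_poly_def F_def LS_eq ..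

definition unsh :: "nat \<Rightarrow> nat \<times> nat \<Rightarrow> nat \<times> nat" where
  "unsh k c = (fst c - k, snd c - k)"

lemma unsh_sh[simp]: "unsh k (sh k c) = c" by (simp add: unsh_def sh_def)

definition PhiA :: "bool list \<Rightarrow> bool list \<Rightarrow> ((nat \<times> nat) \<Rightarrow> nat) \<Rightarrow> ((nat \<times> nat) \<Rightarrow> nat) \<times> ((nat \<times> nat) \<Rightarrow> nat)" where
  "PhiA u v L = (\<lambda>c. if c \<in> chords u then L c else 0, \<lambda>c. if c \<in> chords v then L (sh (length u) c) else 0)"

definition PsiA :: "bool list \<Rightarrow> bool list \<Rightarrow> ((nat \<times> nat) \<Rightarrow> nat) \<times> ((nat \<times> nat) \<Rightarrow> nat) \<Rightarrow> ((nat \<times> nat) \<Rightarrow> nat)" where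
  "PsiA u v p = (\<lambda>c. if c \<in> chords u then fst p c else if c \<in> sh (length u) ` chords v then snd p (unsh (length u) c) else 0)"

lemma bij_app:
  assumes u: "dyck u" and v: "dyck v"
  shows "bij_betw (PhiA u v) (Lab (u @ v) s) (Lab u s \<times> Lab v (s + cntD u))"
proof -
  let ?n = "length u" and ?w = "u @ v"
  have cw: "chords ?w = chords u \<union> sh ?n ` chords v" by (rule chords_app[OF u v])
  have bu: "\<And>c. c \<in> chords u \<Longrightarrow> fst c < snd c \<and> snd c < ?n" using chords_bound[OF u] by simp
  have nsc1: "\<And>c d. c \<in> chords u \<Longrightarrow> d \<in> chords v \<Longrightarrow> \<not> strictly_contains c (sh ?n d)"
    using bu unfolding strictly_contains_def sh_def by fastforce
  have nsc2: "\<And>c d. c \<in> chords u \<Longrightarrow> d \<in> chords v \<Longrightarrow> \<not> strictly_contains (sh ?n d) c"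
    using bu unfolding strictly_contains_def sh_def by fastforce
  have nin: "\<And>d. d \<in> chords v \<Longrightarrow> sh ?n d \<notin> chords u" using bu unfolding sh_def by fastforce
  have capu: "\<And>c. c \<in> chords u \<Longrightarrow> capacity ?w c = capacity u c"
    using bu cap_app_left by (meson less_imp_le_nat less_trans)
  have capv: "\<And>c. capacity ?w (sh ?n c) = cntD u + capacity v c" by (rule cap_app_right)
  show ?thesis
  proof (rule bij_betw_byWitness[where f' = "PsiA u v"])
    show "\<forall>L\<in>Lab ?w s. PsiA u v (PhiA u v L) = L"
    proof
      fix L assume L: "L \<in> Lab ?w s"
      show "PsiA u v (PhiA u v L) = L"
      proof
        fix c
        show "PsiA u v (PhiA u v L) c = L c"
        proof (cases "c \<in> chords u")
          case True then show ?thesis by (simp add: PsiA_def PhiA_def)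
        next
          case False
          show ?thesis
          proof (cases "c \<in> sh ?n ` chords v")
            case True
            then obtain d where d: "d \<in> chords v" "c = sh ?n d" by blast
            then show ?thesis using False by (simp add: PsiA_def PhiA_def)
          next
            case False2: False
            then have "c \<notin> chords ?w" using False cw by simp
            then have "L c = 0" using L unfolding Lab_def by blast
            then show ?thesis using False False2 by (simp add: PsiA_def)
          qed
        qed
      qed
    qed
    show "\<forall>p\<in>Lab u s \<times> Lab v (s + cntD u). PhiA u v (PsiA u v p) = p"
    proof
      fix p assume p: "p \<in> Lab u s \<times> Lab v (s + cntD u)"
      obtain L1 L2 where p12: "p = (L1, L2)" by (cases p)
      have L1: "L1 \<in> Lab u s" and L2: "L2 \<in> Lab v (s + cntD u)" using p p12 by auto
      have z1: "\<And>c. c \<notin> chords u \<Longrightarrow> L1 c = 0" using L1 unfolding Lab_def by blast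
      have z2: "\<And>c. c \<notin> chords v \<Longrightarrow> L2 c = 0" using L2 unfolding Lab_def by blast
      have "(\<lambda>c. if c \<in> chords u then PsiA u v (L1, L2) c else 0) = L1"
      proof
        fix c show "(if c \<in> chords u then PsiA u v (L1, L2) c else 0) = L1 c"
          using z1[of c] p12 unfolding PsiA_def by auto
      qed
      moreover have "(\<lambda>c. if c \<in> chords v then PsiA u v (L1, L2) (sh ?n c) else 0) = L2"
      proof
        fix c show "(if c \<in> chords v then PsiA u v (L1, L2) (sh ?n c) else 0) = L2 c"
          using z2[of c] p12 nin[of c] unfolding PsiA_def by auto
      qed
      ultimately show "PhiA u v (PsiA u v p) = p" unfolding p12 PhiA_def by simp
    qed
    show "PhiA u v ` Lab ?w s \<subseteq> Lab u s \<times> Lab v (s + cntD u)"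
    proof
      fix p assume "p \<in> PhiA u v ` Lab ?w s"
      then obtain L where L: "L \<in> Lab ?w s" and p: "p = PhiA u v L" by blast
      have z: "\<forall>c. c \<notin> chords ?w \<longrightarrow> L c = 0" and
        m: "\<forall>c\<in>chords ?w. \<forall>d\<in>chords ?w. strictly_contains c d \<longrightarrow> L c \<le> L d" and
        lf: "\<forall>c\<in>chords ?w. leaf_chord c \<longrightarrow> L c \<le> capacity ?w c + s"
        using L unfolding Lab_def by auto
      have fp: "fst p \<in> Lab u s" unfolding Lab_def p PhiA_def
        using m lf capu cw by auto
      have lv: "L (sh ?n c) \<le> capacity v c + (s + cntD u)" if c: "c \<in> chords v" "leaf_chord c" for c
      proof -
        have "sh ?n c \<in> chords ?w" using cw c by blast
        then have "L (sh ?n c) \<le> capacity ?w (sh ?n c) + s" using lf c by simp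
        then show ?thesis using capv[of c] by simp
      qed
      have mv: "L (sh ?n c) \<le> L (sh ?n d)" if "c \<in> chords v" "d \<in> chords v" "strictly_contains c d" for c d
        using m cw that by simp
      have sp: "snd p \<in> Lab v (s + cntD u)" unfolding Lab_def p PhiA_def
        using lv mv by auto
      show "p \<in> Lab u s \<times> Lab v (s + cntD u)" using fp sp by (cases p) simp
    qed
    show "PsiA u v ` (Lab u s \<times> Lab v (s + cntD u)) \<subseteq> Lab ?w s"
    proof
      fix L assume "L \<in> PsiA u v ` (Lab u s \<times> Lab v (s + cntD u))"
      then obtain L1 L2 where L1: "L1 \<in> Lab u s" and L2: "L2 \<in> Lab v (s + cntD u)"
        and L: "L = PsiA u v (L1, L2)" by blast
      have m1: "\<forall>c\<in>chords u. \<forall>d\<in>chords u. strictly_contains c d \<longrightarrow> L1 c \<le> L1 d"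
        and l1: "\<forall>c\<in>chords u. leaf_chord c \<longrightarrow> L1 c \<le> capacity u c + s"
        using L1 unfolding Lab_def by auto
      have m2: "\<forall>c\<in>chords v. \<forall>d\<in>chords v. strictly_contains c d \<longrightarrow> L2 c \<le> L2 d"
        and l2: "\<forall>c\<in>chords v. leaf_chord c \<longrightarrow> L2 c \<le> capacity v c + (s + cntD u)"
        using L2 unfolding Lab_def by auto
      show "L \<in> Lab ?w s" unfolding Lab_def
      proof (intro CollectI conjI ballI allI impI)
        fix c assume "c \<notin> chords ?w" then show "L c = 0" using cw by (simp add: L PsiA_def)
      next
        fix c d assume c: "c \<in> chords ?w" and d: "d \<in> chords ?w" and cd: "strictly_contains c d"
        show "L c \<le> L d"
        proof (cases "c \<in> chords u")
          case True
          then have "d \<in> chords u" using d cw nsc1 cd by blast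
          then show ?thesis using True m1 cd by (simp add: L PsiA_def)
        next
          case False
          then obtain c' where c': "c' \<in> chords v" "c = sh ?n c'" using c cw by blast
          have "d \<notin> chords u" using nsc2 c' cd by blast
          then obtain d' where d': "d' \<in> chords v" "d = sh ?n d'" using d cw by blast
          have "strictly_contains c' d'" using cd c' d' by simp
          then show ?thesis using m2 c' d' False \<open>d \<notin> chords u\<close> by (simp add: L PsiA_def)
        qed
      next
        fix c assume c: "c \<in> chords ?w" and lc: "leaf_chord c"
        show "L c \<le> capacity ?w c + s"
        proof (cases "c \<in> chords u")
          case True then show ?thesis using l1 lc capu by (simp add: L PsiA_def)
        next
          case False
          then obtain c' where c': "c' \<in> chords v" "c = sh ?n c'" using c cw by blast
          have "L2 c' \<le> capacity v c' + (s + cntD u)" using l2 c' lc by simp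
          then show ?thesis using c' False capv[of c'] by (simp add: L PsiA_def)
        qed
      qed
    qed
  qed
qed

lemma weight_app:
  assumes u: "dyck u" and v: "dyck v" and L: "L \<in> Lab (u @ v) s"
  shows "(\<Sum>c\<in>chords (u @ v). L c) = (\<Sum>c\<in>chords u. fst (PhiA u v L) c) + (\<Sum>c\<in>chords v. snd (PhiA u v L) c)"
proof -
  have "(\<Sum>c\<in>chords (u @ v). L c) = (\<Sum>c\<in>chords u. L c) + (\<Sum>c\<in>sh (length u) ` chords v. L c)"
    using chords_app[OF u v] disj_app[OF u] finite_chords by (simp add: sum.union_disjoint)
  also have "(\<Sum>c\<in>sh (length u) ` chords v. L c) = (\<Sum>c\<in>chords v. L (sh (length u) c))"
    by (rule sum.reindex[OF inj_on_subset[OF inj_sh subset_UNIV], unfolded comp_def])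
  finally show ?thesis by (simp add: PhiA_def)
qed

lemma F_app:
  assumes u: "dyck u" and v: "dyck v"
  shows "F (u @ v) s = F u s * F v (s + cntD u)"
proof -
  let ?g = "\<lambda>p. monom (1::int) (\<Sum>c\<in>chords u. fst p c) * monom 1 (\<Sum>c\<in>chords v. snd p c)"
  have "F (u @ v) s = (\<Sum>L\<in>Lab (u @ v) s. ?g (PhiA u v L))"
    unfolding F_def by (rule sum.cong) (simp_all add: weight_app[OF u v] mult_monom)
  also have "\<dots> = (\<Sum>p\<in>Lab u s \<times> Lab v (s + cntD u). ?g p)"
    by (rule sum.reindex_bij_betw[OF bij_app[OF u v]])
  also have "\<dots> = F u s * F v (s + cntD u)"
    unfolding F_def sum_product sum.cartesian_product by (simp add: case_prod_beta)
  finally show ?thesis .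
qed

lemma leaf_exists: "dyck x \<Longrightarrow> x \<noteq> [] \<Longrightarrow> \<exists>c\<in>chords x. leaf_chord c \<and> capacity x c = 0"
proof (induction rule: dyck_induct)
  case Nil then show ?case by simp
next
  case (wrap x)
  show ?case
  proof (cases "x = []")
    case True
    then have "(0, 1) \<in> chords (True # x @ [False])" using chords_wrap[OF wrap(1)] by simp
    then show ?thesis by (intro bexI[of _ "(0, Suc 0)"]) (simp_all add: cap_zero leaf_chord_def)
  next
    case False
    then obtain c where c: "c \<in> chords x" "leaf_chord c" "capacity x c = 0" using wrap by blast
    have "sh 1 c \<in> chords (True # x @ [False])" using chords_wrap[OF wrap(1)] c by simp
    moreover have "capacity (True # x @ [False]) (sh 1 c) = 0"
      using cap_wrap[of c x] chords_bound[OF wrap(1) c(1)] c by simp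
    ultimately show ?thesis using c leaf_sh[of 1 c] by blast
  qed
next
  case (app u v)
  then obtain c where c: "c \<in> chords u" "leaf_chord c" "capacity u c = 0" by blast
  have "c \<in> chords (u @ v)" using chords_app[OF app(1,2)] c by simp
  moreover have "capacity (u @ v) c = 0" using cap_app_left[of c u v] chords_bound[OF app(1) c(1)] c by simp
  ultimately show ?case using c by auto
qed

definition Ge :: "bool list \<Rightarrow> nat \<Rightarrow> nat \<Rightarrow> ((nat \<times> nat) \<Rightarrow> nat) set" where
  "Ge x s a = {L \<in> Lab x s. \<forall>c\<in>chords x. a \<le> L c}"

definition PhiW :: "bool list \<Rightarrow> ((nat \<times> nat) \<Rightarrow> nat) \<Rightarrow> nat \<times> ((nat \<times> nat) \<Rightarrow> nat)" where
  "PhiW x L = (L (0, Suc (length x)), \<lambda>c. if c \<in> chords x then L (sh 1 c) else 0)"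

definition PsiW :: "bool list \<Rightarrow> nat \<times> ((nat \<times> nat) \<Rightarrow> nat) \<Rightarrow> ((nat \<times> nat) \<Rightarrow> nat)" where
  "PsiW x p = (\<lambda>c. if c = (0, Suc (length x)) then fst p
      else if c \<in> sh 1 ` chords x then snd p (unsh 1 c) else 0)"

lemma sh_Suc_ne[simp]: "sh (Suc k) c \<noteq> (0, b)" by (simp add: sh_def)

lemma bij_wrap:
  assumes x: "dyck x"
  shows "bij_betw (PhiW x) (Lab (True # x @ [False]) s) (Sigma {0..s} (Ge x s))"
proof -
  let ?w = "True # x @ [False]" and ?o = "(0, Suc (length x))"
  have cw: "chords ?w = insert ?o (sh 1 ` chords x)" by (rule chords_wrap[OF x])
  have bx: "\<And>c. c \<in> chords x \<Longrightarrow> fst c < snd c \<and> snd c < length x" using chords_bound[OF x] by simp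
  have on: "?o \<notin> sh 1 ` chords x" by auto
  have osc: "\<And>c. c \<in> chords x \<Longrightarrow> strictly_contains ?o (sh 1 c)"
    using bx unfolding strictly_contains_def sh_def by fastforce
  have nosc: "\<And>c. \<not> strictly_contains (sh 1 c) ?o" unfolding strictly_contains_def sh_def by simp
  have nosc2: "\<And>c. \<not> strictly_contains c c" unfolding strictly_contains_def by simp
  have capw: "\<And>c. c \<in> chords x \<Longrightarrow> capacity ?w (sh 1 c) = capacity x c"
    using bx cap_wrap by (meson less_imp_le_nat less_trans)
  have capo: "capacity ?w ?o = 0" by (rule cap_zero)
  have lo: "leaf_chord ?o \<longleftrightarrow> x = []" by (simp add: leaf_chord_def)
  show ?thesis
  proof (rule bij_betw_byWitness[where f' = "PsiW x"])
    show "\<forall>L\<in>Lab ?w s. PsiW x (PhiW x L) = L"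
    proof
      fix L assume L: "L \<in> Lab ?w s"
      have z: "\<And>c. c \<notin> chords ?w \<Longrightarrow> L c = 0" using L unfolding Lab_def by blast
      show "PsiW x (PhiW x L) = L"
      proof
        fix c
        show "PsiW x (PhiW x L) c = L c"
        proof (cases "c = ?o")
          case True then show ?thesis by (simp add: PsiW_def PhiW_def)
        next
          case False
          show ?thesis
          proof (cases "c \<in> sh 1 ` chords x")
            case True
            then obtain d where d: "d \<in> chords x" "c = sh 1 d" by blast
            then show ?thesis using False by (simp add: PsiW_def PhiW_def)
          next
            case False2: False
            then have "c \<notin> chords ?w" using False cw by simp
            then show ?thesis using False False2 z by (simp add: PsiW_def)
          qed
        qed
      qed
    qed
    show "\<forall>p\<in>Sigma {0..s} (Ge x s). PhiW x (PsiW x p) = p"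
    proof
      fix p assume p: "p \<in> Sigma {0..s} (Ge x s)"
      obtain a L' where pa: "p = (a, L')" by (cases p)
      have L': "L' \<in> Lab x s" using p pa by (simp add: Ge_def)
      have z: "\<And>c. c \<notin> chords x \<Longrightarrow> L' c = 0" using L' unfolding Lab_def by blast
      have "(\<lambda>c. if c \<in> chords x then PsiW x (a, L') (sh 1 c) else 0) = L'"
      proof
        fix c show "(if c \<in> chords x then PsiW x (a, L') (sh 1 c) else 0) = L' c"
          using z[of c] unfolding PsiW_def by (auto simp: sh_def unsh_def)
      qed
      then show "PhiW x (PsiW x p) = p" unfolding pa PhiW_def by (simp add: PsiW_def)
    qed
    show "PhiW x ` Lab ?w s \<subseteq> Sigma {0..s} (Ge x s)"
    proof
      fix p assume "p \<in> PhiW x ` Lab ?w s"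
      then obtain L where L: "L \<in> Lab ?w s" and p: "p = PhiW x L" by blast
      have m: "\<forall>c\<in>chords ?w. \<forall>d\<in>chords ?w. strictly_contains c d \<longrightarrow> L c \<le> L d" and
        lf: "\<forall>c\<in>chords ?w. leaf_chord c \<longrightarrow> L c \<le> capacity ?w c + s"
        using L unfolding Lab_def by auto
      have lx: "L (sh 1 c) \<le> capacity x c + s" if c: "c \<in> chords x" "leaf_chord c" for c
      proof -
        have "sh 1 c \<in> chords ?w" using cw c by blast
        then have "L (sh 1 c) \<le> capacity ?w (sh 1 c) + s" using lf c by simp
        then show ?thesis using capw[OF c(1)] by simp
      qed
      have mx: "L (sh 1 c) \<le> L (sh 1 d)" if "c \<in> chords x" "d \<in> chords x" "strictly_contains c d" for c d
        using m cw that by simp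
      have ge: "L ?o \<le> L (sh 1 c)" if "c \<in> chords x" for c
        using m cw osc[OF that] that by simp
      have os: "L ?o \<le> s"
      proof (cases "x = []")
        case True then show ?thesis using lf lo capo cw by simp
      next
        case False
        then obtain c0 where c0: "c0 \<in> chords x" "leaf_chord c0" "capacity x c0 = 0"
          using leaf_exists[OF x] by blast
        show ?thesis using ge[OF c0(1)] lx[OF c0(1,2)] c0(3) by simp
      qed
      have sp: "snd p \<in> Ge x s (fst p)" unfolding Ge_def Lab_def p PhiW_def
        using lx mx ge by auto
      show "p \<in> Sigma {0..s} (Ge x s)" using sp os by (cases p) (simp add: p PhiW_def)
    qed
    show "PsiW x ` Sigma {0..s} (Ge x s) \<subseteq> Lab ?w s"
    proof
      fix L assume "L \<in> PsiW x ` Sigma {0..s} (Ge x s)"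
      then obtain a L' where a: "a \<le> s" and L': "L' \<in> Ge x s a"
        and L: "L = PsiW x (a, L')" by auto
      have m1: "\<forall>c\<in>chords x. \<forall>d\<in>chords x. strictly_contains c d \<longrightarrow> L' c \<le> L' d"
        and l1: "\<forall>c\<in>chords x. leaf_chord c \<longrightarrow> L' c \<le> capacity x c + s"
        and g1: "\<forall>c\<in>chords x. a \<le> L' c"
        using L' unfolding Ge_def Lab_def by auto
      show "L \<in> Lab ?w s" unfolding Lab_def
      proof (intro CollectI conjI ballI allI impI)
        fix c assume "c \<notin> chords ?w" then show "L c = 0" using cw by (simp add: L PsiW_def)
      next
        fix c d assume c: "c \<in> chords ?w" and d: "d \<in> chords ?w" and cd: "strictly_contains c d"
        show "L c \<le> L d"
        proof (cases "c = ?o")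
          case True
          then have "d \<noteq> ?o" using cd nosc2 by blast
          then obtain d' where d': "d' \<in> chords x" "d = sh 1 d'" using d cw by blast
          then show ?thesis using True g1 by (simp add: L PsiW_def)
        next
          case False
          then obtain c' where c': "c' \<in> chords x" "c = sh 1 c'" using c cw by blast
          have "d \<noteq> ?o" using nosc c' cd by blast
          then obtain d' where d': "d' \<in> chords x" "d = sh 1 d'" using d cw by blast
          have "strictly_contains c' d'" using cd c' d' by simp
          then have "L' c' \<le> L' d'" using m1 c' d' by blast
          then show ?thesis using c' d' by (simp add: L PsiW_def)
        qed
      next
        fix c assume c: "c \<in> chords ?w" and lc: "leaf_chord c"
        show "L c \<le> capacity ?w c + s"
        proof (cases "c = ?o")
          case True then show ?thesis using a capo by (simp add: L PsiW_def)
        next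
          case False
          then obtain c' where c': "c' \<in> chords x" "c = sh 1 c'" using c cw by blast
          have "L' c' \<le> capacity x c' + s" using l1 c' lc by simp
          then show ?thesis using c' capw[of c'] by (simp add: L PsiW_def)
        qed
      qed
    qed
  qed
qed

lemma weight_wrap:
  assumes x: "dyck x"
  shows "(\<Sum>c\<in>chords (True # x @ [False]). L c) = fst (PhiW x L) + (\<Sum>c\<in>chords x. snd (PhiW x L) c)"
proof -
  have on: "(0, Suc (length x)) \<notin> sh 1 ` chords x" by auto
  have "(\<Sum>c\<in>chords (True # x @ [False]). L c) = L (0, Suc (length x)) + (\<Sum>c\<in>sh 1 ` chords x. L c)"
    using chords_wrap[OF x] on finite_chords by simp
  also have "(\<Sum>c\<in>sh 1 ` chords x. L c) = (\<Sum>c\<in>chords x. L (sh 1 c))"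
    by (rule sum.reindex[OF inj_on_subset[OF inj_sh subset_UNIV], unfolded comp_def])
  finally show ?thesis by (simp add: PhiW_def)
qed

lemma F_wrap_sum:
  assumes x: "dyck x" and fin: "finite (Lab x s)"
  shows "F (True # x @ [False]) s = (\<Sum>a\<in>{0..s}. monom 1 a * (\<Sum>L\<in>Ge x s a. monom 1 (\<Sum>c\<in>chords x. L c)))"
proof -
  let ?g = "\<lambda>p. monom (1::int) (fst p) * monom 1 (\<Sum>c\<in>chords x. snd p c)"
  have "F (True # x @ [False]) s = (\<Sum>L\<in>Lab (True # x @ [False]) s. ?g (PhiW x L))"
    unfolding F_def by (rule sum.cong) (simp_all add: weight_wrap[OF x] mult_monom)
  also have "\<dots> = (\<Sum>p\<in>Sigma {0..s} (Ge x s). ?g p)"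
    by (rule sum.reindex_bij_betw[OF bij_wrap[OF x]])
  also have "\<dots> = (\<Sum>a\<in>{0..s}. \<Sum>L\<in>Ge x s a. ?g (a, L))"
    using fin by (subst sum.Sigma) (auto simp: Ge_def case_prod_beta)
  also have "\<dots> = (\<Sum>a\<in>{0..s}. monom 1 a * (\<Sum>L\<in>Ge x s a. monom 1 (\<Sum>c\<in>chords x. L c)))"
    by (simp add: sum_distrib_left)
  finally show ?thesis .
qed

definition SubL :: "bool list \<Rightarrow> nat \<Rightarrow> ((nat \<times> nat) \<Rightarrow> nat) \<Rightarrow> ((nat \<times> nat) \<Rightarrow> nat)" where
  "SubL x a L = (\<lambda>c. if c \<in> chords x then L c - a else 0)"

definition AddL :: "bool list \<Rightarrow> nat \<Rightarrow> ((nat \<times> nat) \<Rightarrow> nat) \<Rightarrow> ((nat \<times> nat) \<Rightarrow> nat)" where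
  "AddL x a L = (\<lambda>c. if c \<in> chords x then L c + a else 0)"

lemma bij_sub:
  assumes as: "a \<le> s"
  shows "bij_betw (SubL x a) (Ge x s a) (Lab x (s - a))"
proof (rule bij_betw_byWitness[where f' = "AddL x a"])
  show "\<forall>L\<in>Ge x s a. AddL x a (SubL x a L) = L"
  proof
    fix L assume L: "L \<in> Ge x s a"
    have z: "\<And>c. c \<notin> chords x \<Longrightarrow> L c = 0" and g: "\<And>c. c \<in> chords x \<Longrightarrow> a \<le> L c"
      using L unfolding Ge_def Lab_def by auto
    show "AddL x a (SubL x a L) = L"
    proof
      fix c show "AddL x a (SubL x a L) c = L c" using z[of c] g[of c] by (auto simp: AddL_def SubL_def)
    qed
  qed
  show "\<forall>L\<in>Lab x (s - a). SubL x a (AddL x a L) = L"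
  proof
    fix L assume L: "L \<in> Lab x (s - a)"
    have z: "\<And>c. c \<notin> chords x \<Longrightarrow> L c = 0" using L unfolding Lab_def by auto
    show "SubL x a (AddL x a L) = L"
    proof
      fix c show "SubL x a (AddL x a L) c = L c" using z[of c] by (auto simp: AddL_def SubL_def)
    qed
  qed
  show "SubL x a ` Ge x s a \<subseteq> Lab x (s - a)"
  proof
    fix L' assume "L' \<in> SubL x a ` Ge x s a"
    then obtain L where L: "L \<in> Ge x s a" and L': "L' = SubL x a L" by blast
    have m: "\<forall>c\<in>chords x. \<forall>d\<in>chords x. strictly_contains c d \<longrightarrow> L c \<le> L d"
      and l: "\<forall>c\<in>chords x. leaf_chord c \<longrightarrow> L c \<le> capacity x c + s"
      using L unfolding Ge_def Lab_def by auto
    show "L' \<in> Lab x (s - a)" unfolding Lab_def L' SubL_def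
      using m l as by (auto simp: diff_le_mono)
  qed
  show "AddL x a ` Lab x (s - a) \<subseteq> Ge x s a"
  proof
    fix L' assume "L' \<in> AddL x a ` Lab x (s - a)"
    then obtain L where L: "L \<in> Lab x (s - a)" and L': "L' = AddL x a L" by blast
    have m: "\<forall>c\<in>chords x. \<forall>d\<in>chords x. strictly_contains c d \<longrightarrow> L c \<le> L d"
      and l: "\<forall>c\<in>chords x. leaf_chord c \<longrightarrow> L c \<le> capacity x c + (s - a)"
      using L unfolding Lab_def by auto
    show "L' \<in> Ge x s a" unfolding Ge_def Lab_def L' AddL_def
      using m l as by force
  qed
qed

lemma sum_Ge:
  assumes as: "a \<le> s"
  shows "(\<Sum>L\<in>Ge x s a. monom (1::int) (\<Sum>c\<in>chords x. L c)) = monom 1 (a * card (chords x)) * F x (s - a)"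
proof -
  have w: "(\<Sum>c\<in>chords x. L c) = (\<Sum>c\<in>chords x. SubL x a L c) + a * card (chords x)" if L: "L \<in> Ge x s a" for L
  proof -
    have g: "\<And>c. c \<in> chords x \<Longrightarrow> a \<le> L c" using L unfolding Ge_def by auto
    have "(\<Sum>c\<in>chords x. L c) = (\<Sum>c\<in>chords x. (L c - a) + a)" using g by (intro sum.cong) auto
    also have "\<dots> = (\<Sum>c\<in>chords x. SubL x a L c) + a * card (chords x)"
      by (simp add: sum.distrib SubL_def mult.commute)
    finally show ?thesis .
  qed
  have "(\<Sum>L\<in>Ge x s a. monom (1::int) (\<Sum>c\<in>chords x. L c))
      = (\<Sum>L\<in>Ge x s a. monom 1 (a * card (chords x)) * monom 1 (\<Sum>c\<in>chords x. SubL x a L c))"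
    by (rule sum.cong) (simp_all add: w mult_monom add.commute)
  also have "\<dots> = monom 1 (a * card (chords x)) * (\<Sum>L\<in>Ge x s a. monom 1 (\<Sum>c\<in>chords x. SubL x a L c))"
    by (simp add: sum_distrib_left)
  also have "(\<Sum>L\<in>Ge x s a. monom (1::int) (\<Sum>c\<in>chords x. SubL x a L c)) = F x (s - a)"
    unfolding F_def by (rule sum.reindex_bij_betw[OF bij_sub[OF as]])
  finally show ?thesis .
qed

lemma Lab_Nil: "Lab [] s = {\<lambda>_. 0}"
  by (auto simp: Lab_def chords_Nil)

lemma F_Nil: "F [] s = 1"
  by (simp add: F_def Lab_Nil chords_Nil)

lemma main_ind:
  "dyck w \<Longrightarrow> \<forall>s. finite (Lab w s) \<and> F w s = qb (s + card (chords w)) (card (chords w)) * F w 0"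
proof (induction rule: dyck_induct)
  case Nil then show ?case by (simp add: Lab_Nil chords_Nil F_Nil)
next
  case (wrap x)
  let ?w = "True # x @ [False]"
  define m where "m = card (chords x)"
  have cw: "card (chords ?w) = Suc m"
    using card_chords[OF wrap(1)] card_chords[OF dyck_wrap[OF wrap(1)]] by (simp add: m_def)
  have fin: "\<And>s. finite (Lab x s)" using wrap(2) by blast
  have Fx: "\<And>s. F x s = qb (s + m) m * F x 0" using wrap(2) m_def by blast
  have Fw: "F ?w s = qb (s + Suc m) (Suc m) * F x 0" for s
  proof -
    have "F ?w s = (\<Sum>a\<in>{0..s}. monom 1 a * (\<Sum>L\<in>Ge x s a. monom 1 (\<Sum>c\<in>chords x. L c)))"
      by (rule F_wrap_sum[OF wrap(1) fin])
    also have "\<dots> = (\<Sum>a\<in>{0..s}. monom 1 a * (monom 1 (a * m) * F x (s - a)))"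
    proof (rule sum.cong)
      fix a assume "a \<in> {0..s}"
      then have "a \<le> s" by simp
      then show "monom 1 a * (\<Sum>L\<in>Ge x s a. monom 1 (\<Sum>c\<in>chords x. L c)) = monom 1 a * (monom 1 (a * m) * F x (s - a))"
        using sum_Ge[of a s x] unfolding m_def by simp
    qed simp
    also have "\<dots> = (\<Sum>a\<le>s. monom 1 (a * (m + 1)) * qb (s - a + m) m) * F x 0"
      unfolding sum_distrib_right atLeast0AtMost
    proof (rule sum.cong)
      fix a show "monom 1 a * (monom 1 (a * m) * F x (s - a)) = monom 1 (a * (m + 1)) * qb (s - a + m) m * F x 0"
        using Fx[of "s - a"] by (simp add: mult_monom algebra_simps)
    qed simp
    also have "\<dots> = qb (s + Suc m) (Suc m) * F x 0" using qb_hockey[where s=s and m=m] by simp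
    finally show ?thesis .
  qed
  have h0: "F ?w 0 = F x 0" by (simp only: Fw add_0 qb_nn mult.left_neutral)
  moreover have "finite (Lab ?w s)" for s
  proof -
    have "finite (Sigma {0..s} (Ge x s))"
      using fin by (intro finite_SigmaI) (auto simp: Ge_def)
    then show ?thesis using bij_betw_finite[OF bij_wrap[OF wrap(1)]] by blast
  qed
  ultimately show ?case
  proof (intro allI conjI)
    fix s show "F ?w s = qb (s + card (chords ?w)) (card (chords ?w)) * F ?w 0"
      unfolding cw h0 by (rule Fw)
  qed
next
  case (app u v)
  define n where "n = card (chords u)"
  define m where "m = card (chords v)"
  have nu: "cntD u = n" using card_chords[OF app(1)] n_def by simp
  have cw: "card (chords (u @ v)) = n + m"
    using card_chords[OF app(1)] card_chords[OF app(2)] card_chords[OF dyck_app[OF app(1,2)]]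
    by (simp add: n_def m_def)
  have Fu: "\<And>s. F u s = qb (s + n) n * F u 0" using app(5) n_def by blast
  have Fv: "\<And>s. F v s = qb (s + m) m * F v 0" using app(6) m_def by blast
  have Fw: "\<And>s. F (u @ v) s = F u s * F v (s + n)" using F_app[OF app(1,2)] nu by simp
  have e: "F (u @ v) s = qb (s + (n + m)) (n + m) * F (u @ v) 0" for s
  proof -
    have "F (u @ v) s = qb (s + n) n * qb (s + n + m) m * (F u 0 * F v 0)"
      using Fw[of s] Fu[of s] Fv[of "s + n"] by (simp add: algebra_simps)
    also have "\<dots> = qb (s + n + m) (n + m) * qb (n + m) m * (F u 0 * F v 0)"
      using qb_mult by simp
    also have "\<dots> = qb (s + (n + m)) (n + m) * F (u @ v) 0"
      using Fw[of 0] Fv[of n] by (simp add: algebra_simps)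
    finally show ?thesis .
  qed
  moreover have "finite (Lab (u @ v) s)" for s
  proof -
    have "finite (Lab u s \<times> Lab v (s + cntD u))" using app(5,6) by blast
    then show ?thesis using bij_betw_finite[OF bij_app[OF app(1,2)]] by blast
  qed
  ultimately show ?case
  proof (intro allI conjI)
    fix s show "F (u @ v) s = qb (s + card (chords (u @ v))) (card (chords (u @ v))) * F (u @ v) 0"
      using e[of s] unfolding cw .
  qed
qed

theorem mainTheorem11:
  fixes l1 l2 :: "bool list" and n1 m1 :: nat
  assumes "dyck l1" and "dyck l2"
    and "length l1 = 2 * n1" and "length l2 = 2 * m1"
  shows "P_poly (l1 @ l2) = qbinom (n1 + m1) n1 * P_poly l1 * P_poly l2"
proof -
  have n: "cntD l1 = n1" using cntD_dyck[OF assms(1)] assms(3) by simp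
  have m: "card (chords l2) = m1" using cntD_dyck[OF assms(2)] assms(4) card_chords[OF assms(2)] by simp
  have "P_poly (l1 @ l2) = F l1 0 * F l2 n1" using F_app[OF assms(1,2), of 0] n by (simp add: P_F)
  also have "F l2 n1 = qb (n1 + m1) m1 * F l2 0"
  proof -
    have "F l2 n1 = qb (n1 + card (chords l2)) (card (chords l2)) * F l2 0"
      using main_ind[OF assms(2)] by blast
    then show ?thesis unfolding m .
  qed
  also have "qb (n1 + m1) m1 = qbinom (n1 + m1) n1"
    using qbinom_qb[of m1 "n1 + m1"] unfolding qbinom_def by (simp add: mult.commute)
  finally show ?thesis by (simp add: P_F algebra_simps)
qed

end
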